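(* For all $N\in\mathbb{N}$, $|\mathcal{D}_6(N)|=\frac18\,\#\{(x,y)\in\mathbb{Z}^2\mid x^2+y^2=12N+5\}$.
   Context: A bar partition is an integer partition $\lambda=(\lambda_1>\lambda_2>\dots>\lambda_r>0)$ with distinct parts; its size is $\sum\lambda_k$. Its double distinct partition $\widetilde\lambda$ is the partition with Frobenius coordinates $(\lambda_1,\dots,\lambda_r\mid\lambda_1-1,\dots,\lambda_r-1)$ (obtained by shifting row $k$ of the Young diagram of $\lambda$ by $k$ steps to the right and completing by the transpose of this shifted diagram). A partition is a $6$-core if none of its hook lengths equals $6$. $\mathcal{D}_6(N)$ is the set of bar partitions $\lambda$ of size $N$ with no part equal to $3$ such that $\widetilde\lambda$ is a $6$-core. *)

theory Defs
  imports Complex_Main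
begin

(* A partition is represented by its Young diagram: a set of cells (row, column),
   0-indexed, in English convention. *)

definition bar_partition :: "nat list \<Rightarrow> bool" where
  "bar_partition l \<longleftrightarrow> sorted_wrt (>) l \<and> (\<forall>x\<in>set l. x > 0)"

(* Young diagram of the partition with Frobenius coordinates
   (a_0,...,a_{r-1} | b_0,...,b_{r-1}) (0-indexed rows/columns):
   row k contains the diagonal cell (k,k) and a_k cells to its right,
   column k contains b_k cells below the diagonal cell (k,k). *)
definition frobenius_diagram :: "nat list \<Rightarrow> nat list \<Rightarrow> (nat \<times> nat) set" where
  "frobenius_diagram a b =
     (\<Union>k<length a. {(k, j) | j. k \<le> j \<and> j \<le> k + a ! k}
                  \<union> {(i, k) | i. k < i \<and> i \<le> k + b ! k})"

definition double_distinct :: "nat list \<Rightarrow> (nat \<times> nat) set" where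
  "double_distinct l = frobenius_diagram l (map (\<lambda>x. x - 1) l)"

definition hook_length :: "(nat \<times> nat) set \<Rightarrow> nat \<times> nat \<Rightarrow> nat" where
  "hook_length D c =
     card {j'. j' > snd c \<and> (fst c, j') \<in> D} + card {i'. i' > fst c \<and> (i', snd c) \<in> D} + 1"

definition is_core :: "nat \<Rightarrow> (nat \<times> nat) set \<Rightarrow> bool" where
  "is_core t D \<longleftrightarrow> (\<forall>c\<in>D. hook_length D c \<noteq> t)"

definition D6 :: "nat \<Rightarrow> nat list set" where
  "D6 N = {l. bar_partition l \<and> sum_list l = N \<and> 3 \<notin> set l \<and> is_core 6 (double_distinct l)}"

end

theory Submission
  imports Defs
begin

lemma downclosed_eq:
  fixes K :: "nat set"
  assumes fin: "finite K" and dc: "\<And>x y. x \<in> K \<Longrightarrow> y \<le> x \<Longrightarrow> y \<in> K"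
  shows "K = {..<card K}"
proof
  show "K \<subseteq> {..<card K}"
  proof
    fix x assume "x \<in> K"
    then have "{..x} \<subseteq> K" using dc by auto
    then have "card {..x} \<le> card K" by (rule card_mono[OF fin])
    then show "x \<in> {..<card K}" by simp
  qed
next
  show "{..<card K} \<subseteq> K"
  proof
    fix n assume n: "n \<in> {..<card K}"
    show "n \<in> K"
    proof (rule ccontr)
      assume "n \<notin> K"
      then have "K \<subseteq> {..<n}" using dc by (metis lessThan_iff not_le subsetI)
      then have "card K \<le> n" by (metis card_lessThan card_mono finite_lessThan)
      then show False using n by simp
    qed
  qed
qed

locale barp = fixes l :: "nat list" assumes bp: "bar_partition l"
begin

abbreviation r where "r \<equiv> length l"
definition E where "E k = k + l!k"
definition c where "c j = card {k. k < r \<and> j \<le> E k}"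
abbreviation DD where "DD \<equiv> double_distinct l"

lemma strict: "k < k' \<Longrightarrow> k' < r \<Longrightarrow> l!k' < l!k"
  using bp unfolding bar_partition_def by (metis sorted_wrt_nth_less)

lemma pos: "k < r \<Longrightarrow> 0 < l!k"
  using bp unfolding bar_partition_def by (simp)

lemma gap: "k \<le> k' \<Longrightarrow> k' < r \<Longrightarrow> l!k' + (k'-k) \<le> l!k"
proof (induction k')
  case 0 then show ?case by simp
next
  case (Suc k')
  show ?case
  proof (cases "k = Suc k'")
    case True then show ?thesis by simp
  next
    case False
    then have "k \<le> k'" using Suc by simp
    then have "l!k' + (k'-k) \<le> l!k" using Suc by simp
    moreover have "l!(Suc k') < l!k'" using strict Suc by simp
    ultimately show ?thesis using \<open>k \<le> k'\<close> by simp
  qed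
qed

lemma lower: assumes "k < r" shows "r - k \<le> l!k"
proof -
  have "l!(r-1) + (r-1-k) \<le> l!k" using gap[of k "r-1"] assms by simp
  moreover have "0 < l!(r-1)" using pos[of "r-1"] assms by simp
  ultimately show ?thesis by linarith
qed

lemma E_mono: "k \<le> k' \<Longrightarrow> k' < r \<Longrightarrow> E k' \<le> E k"
  using gap[of k k'] unfolding E_def by simp

lemma mem: "(i,j) \<in> DD \<longleftrightarrow> (i < r \<and> i \<le> j \<and> j \<le> i + l!i) \<or> (j < r \<and> j < i \<and> i < j + l!j)"
proof -
  have "(i,j) \<in> DD \<longleftrightarrow> (\<exists>k<r. (i = k \<and> k \<le> j \<and> j \<le> k + l!k) \<or> (j = k \<and> k < i \<and> i \<le> k + (l!k - 1)))"
    unfolding double_distinct_def frobenius_diagram_def by auto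
  also have "\<dots> \<longleftrightarrow> (i < r \<and> i \<le> j \<and> j \<le> i + l!i) \<or> (j < r \<and> j < i \<and> i < j + l!j)"
    using pos by fastforce
  finally show ?thesis .
qed

lemma row: "i < r \<Longrightarrow> (i,j) \<in> DD \<longleftrightarrow> j \<le> i + l!i"
  using mem gap[of j i] pos[of i] by (cases "j < i") auto

lemma col: assumes jr: "j < r" shows "(i,j) \<in> DD \<longleftrightarrow> i < j + l!j"
proof (cases "i \<le> j")
  case True
  with jr show ?thesis using mem gap[of i j] pos[of j] True by auto
next
  case False
  then show ?thesis using mem jr by auto
qed

lemma rowout: "r \<le> i \<Longrightarrow> (i,j) \<in> DD \<longleftrightarrow> j < r \<and> i < E j"
  using mem unfolding E_def by auto

lemma colout: "r \<le> j \<Longrightarrow> (i,j) \<in> DD \<longleftrightarrow> i < r \<and> j \<le> E i"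
  using mem unfolding E_def by auto

lemma cset: "{k. k < r \<and> j \<le> E k} = {..<c j}"
  unfolding c_def
  by (rule downclosed_eq) (auto intro: order_trans[OF _ E_mono])

lemma c_le: "c j \<le> r"
  unfolding c_def by (rule order_trans[OF card_mono[of "{..<r}"]]) auto

end


context barp begin

lemma inner_le: assumes "i < r" "j < r" shows "j \<le> i + l!i" "i < j + l!j"
proof -
  show "j \<le> i + l!i"
  proof (cases "j \<le> i")
    case False then show ?thesis using gap[of i j] assms by simp
  qed simp
  show "i < j + l!j"
  proof (cases "i \<le> j")
    case True then show ?thesis using pos[of j] assms by simp
  next
    case False then show ?thesis using gap[of j i] pos[of i] assms by simp
  qed
qed

lemma inner: "i < r \<Longrightarrow> j < r \<Longrightarrow> (i,j) \<in> DD"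
  using row inner_le by simp

lemma hook1: assumes "i < r" "j < r" shows "hook_length DD (i,j) = l!i + l!j"
proof -
  have a: "{j'. j' > j \<and> (i,j') \<in> DD} = {j<..i+l!i}" using row assms by auto
  have b: "{i'. i' > i \<and> (i',j) \<in> DD} = {i<..<j+l!j}" using col assms by auto
  show ?thesis unfolding hook_length_def using a b inner_le[OF assms] by simp
qed

lemma hook2: assumes "i < r" "r \<le> j" "j \<le> E i"
  shows "hook_length DD (i,j) + j = l!i + c j"
proof -
  have "i \<in> {k. k < r \<and> j \<le> E k}" using assms by simp
  then have ic: "i < c j" unfolding cset by simp
  have a: "{j'. j' > j \<and> (i,j') \<in> DD} = {j<..i+l!i}" using row assms by auto
  have "{i'. i' > i \<and> (i',j) \<in> DD} = {i'. i' > i \<and> i' \<in> {k. k < r \<and> j \<le> E k}}"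
    using colout assms by auto
  also have "\<dots> = {i<..<c j}" using cset by auto
  finally have b: "{i'. i' > i \<and> (i',j) \<in> DD} = {i<..<c j}" .
  show ?thesis unfolding hook_length_def using a b ic assms unfolding E_def by simp
qed

lemma hook3: assumes "r \<le> i" "j < r" "i < E j"
  shows "hook_length DD (i,j) + Suc i = l!j + c (Suc i)"
proof -
  have "j \<in> {k. k < r \<and> Suc i \<le> E k}" using assms by simp
  then have jc: "j < c (Suc i)" unfolding cset by simp
  have "{j'. j' > j \<and> (i,j') \<in> DD} = {j'. j' > j \<and> j' \<in> {k. k < r \<and> Suc i \<le> E k}}"
    using rowout assms by auto
  also have "\<dots> = {j<..<c (Suc i)}" using cset by auto
  finally have a: "{j'. j' > j \<and> (i,j') \<in> DD} = {j<..<c (Suc i)}" .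
  have b: "{i'. i' > i \<and> (i',j) \<in> DD} = {i<..<j+l!j}" using col assms by auto
  show ?thesis unfolding hook_length_def using a b jc assms unfolding E_def by simp
qed

end

context barp begin
lemma F1: assumes "r \<le> j" shows "j - c j \<notin> set l"
proof
  assume "j - c j \<in> set l"
  then obtain t where t: "t < r" "l!t = j - c j" by (auto simp: in_set_conv_nth)
  have cj: "c j \<le> j" using c_le assms by (meson order_trans)
  show False
  proof (cases "t < c j")
    case True
    then have "t \<in> {k. k < r \<and> j \<le> E k}" using cset by auto
    then have "j \<le> t + l!t" unfolding E_def by simp
    then show False using t cj True by simp
  next
    case False
    then have "t \<notin> {k. k < r \<and> j \<le> E k}" using cset by auto
    then have "t + l!t < j" using t unfolding E_def by simp
    then show False using t cj False by simp
  qed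
qed

end

context barp begin

lemma F2: assumes m: "m \<notin> set l" and i: "i < r" and mi: "m < l!i"
  shows "\<exists>j. r \<le> j \<and> j \<le> E i \<and> c j + m = j"
proof -
  define S where "S = {k. k < r \<and> m < l!k}"
  define s where "s = card S"
  have Sfin: "finite S" unfolding S_def by simp
  have Seq: "S = {..<s}" unfolding s_def
  proof (rule downclosed_eq[OF Sfin])
    fix x y assume xy: "x \<in> S" "y \<le> x"
    then have "x < r" "m < l!x" unfolding S_def by simp_all
    moreover have "l!x + (x-y) \<le> l!y" using gap[of y x] xy(2) \<open>x < r\<close> by simp
    ultimately show "y \<in> S" unfolding S_def using xy(2) by simp
  qed
  have memS: "k \<in> S \<longleftrightarrow> k < s" for k using Seq by simp
  have memS2: "k \<in> S \<longleftrightarrow> k < r \<and> m < l!k" for k unfolding S_def by simp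
  have sr: "s \<le> r" unfolding s_def S_def by (rule order_trans[OF card_mono[of "{..<r}"]]) auto
  have notS: "l!k < m" if "k < r" "\<not> k < s" for k
  proof -
    have "l!k \<in> set l" using that by simp
    then have "l!k \<noteq> m" using m by metis
    moreover have "\<not> m < l!k" using that memS memS2 by blast
    ultimately show ?thesis by simp
  qed
  have inS: "m + s \<le> E k" if ks: "k < s" for k
  proof -
    have "s - 1 < s" using ks by simp
    then have "m < l!(s-1)" using memS memS2 by blast
    moreover have "l!(s-1) + (s-1-k) \<le> l!k" using gap[of k "s-1"] ks sr by simp
    ultimately show ?thesis unfolding E_def using ks by simp
  qed
  have outS: "E k < m + s" if "k < r" "\<not> k < s" for k
  proof -
    have sk: "s \<le> k" using that by simp
    have "l!s < m" using notS[of s] sk that by simp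
    moreover have "l!k + (k-s) \<le> l!s" using gap[of s k] sk that by simp
    ultimately show ?thesis unfolding E_def using sk by simp
  qed
  have "{k. k < r \<and> m + s \<le> E k} = {..<s}"
  proof (intro set_eqI iffI)
    fix k assume "k \<in> {..<s}" then show "k \<in> {k. k < r \<and> m + s \<le> E k}"
      using inS sr by simp
  next
    fix k assume "k \<in> {k. k < r \<and> m + s \<le> E k}"
    then have "k < r" "m + s \<le> E k" by simp_all
    then show "k \<in> {..<s}" using outS[of k] by (simp, linarith)
  qed
  then have cms: "c (m + s) = s" unfolding c_def by simp
  have rms: "r \<le> m + s"
  proof (cases "s < r")
    case True
    then have "l!s < m" using notS by simp
    moreover have "r - s \<le> l!s" using lower True by simp
    ultimately show ?thesis by simp
  next
    case False then show ?thesis using sr by simp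
  qed
  have "i < s" using memS memS2 i mi by blast
  then have "m + s \<le> E i" using inS by simp
  then show ?thesis using rms cms by (intro exI[of _ "m+s"]) simp
qed
end

definition Q :: "nat set \<Rightarrow> bool" where
  "Q A \<longleftrightarrow> (\<forall>a\<in>A. 6 \<le> a \<longrightarrow> a - 6 \<in> A) \<and> 3 \<notin> A \<and> \<not>(1\<in>A \<and> 5\<in>A) \<and> \<not>(2\<in>A \<and> 4\<in>A)"
context barp begin
lemma core_imp_Q: assumes core: "is_core 6 DD" shows "Q (set l)"
proof -
  have nh: "hook_length DD (i,j) \<noteq> 6" if "(i,j) \<in> DD" for i j
    using core that unfolding is_core_def by blast
  have two: False if ab: "a \<in> set l" "b \<in> set l" "a + b = 6" for a b
  proof -
    obtain i where i: "i < r" "l!i = a" using ab(1) by (metis in_set_conv_nth)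
    obtain j where j: "j < r" "l!j = b" using ab(2) by (metis in_set_conv_nth)
    have "(i,j) \<in> DD" using inner i j by blast
    moreover have "hook_length DD (i,j) = 6" using hook1[OF i(1) j(1)] i j ab(3) by simp
    ultimately show False using nh by blast
  qed
  have cl: "a - 6 \<in> set l" if a: "a \<in> set l" "6 \<le> a" for a
  proof (rule ccontr)
    assume m: "a - 6 \<notin> set l"
    obtain i where i: "i < r" "l!i = a" using a(1) by (metis in_set_conv_nth)
    have "a - 6 < l!i" using i a by simp
    then obtain j where j: "r \<le> j" "j \<le> E i" "c j + (a - 6) = j"
      using F2[OF m i(1)] by blast
    have "(i,j) \<in> DD" using colout j i by simp
    moreover have "hook_length DD (i,j) + j = l!i + c j" using hook2 i j by simp
    ultimately show False using nh[of i j] i j a by simp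
  qed
  have "3 \<notin> set l" using two[of 3 3] by auto
  moreover have "\<not>(1 \<in> set l \<and> 5 \<in> set l)" using two[of 1 5] by auto
  moreover have "\<not>(2 \<in> set l \<and> 4 \<in> set l)" using two[of 2 4] by auto
  ultimately show "Q (set l)" unfolding Q_def using cl by blast
qed
lemma six_split: "x + y = 6 \<Longrightarrow> 0 < x \<Longrightarrow> 0 < y \<Longrightarrow>
   (x = 1 \<and> y = 5) \<or> (x = 5 \<and> y = 1) \<or> (x = 2 \<and> y = 4) \<or> (x = 4 \<and> y = 2) \<or> (x = 3 \<and> y = 3)"
  for x y :: nat by presburger

lemma Q_imp_core: assumes q: "Q (set l)" shows "is_core 6 DD"
  unfolding is_core_def
proof (intro ballI notI)
  fix x assume x: "x \<in> DD" and h: "hook_length DD x = 6"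
  obtain i j where ij: "x = (i,j)" by force
  have x': "(i,j) \<in> DD" using x ij by simp
  have h': "hook_length DD (i,j) = 6" using h ij by simp
  have cl: "a - 6 \<in> set l" if "a \<in> set l" "6 \<le> a" for a using q that unfolding Q_def by blast
  show False
  proof (cases "i < r")
    case ir: True
    show False
    proof (cases "j < r")
      case True
      then have "l!i + l!j = 6" using hook1 ir h' by simp
      moreover have "l!i \<in> set l" "l!j \<in> set l" using ir True by auto
      moreover have "0 < l!i" "0 < l!j" using pos ir True by auto
      ultimately show False using q six_split[of "l!i" "l!j"] unfolding Q_def by metis
    next
      case False
      then have jr: "r \<le> j" by simp
      then have jE: "j \<le> E i" using colout x' by simp
      have "6 + j = l!i + c j" using hook2[OF ir jr jE] h' by simp
      moreover have "c j \<le> j" using c_le jr by (meson order_trans)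
      ultimately have "6 \<le> l!i" "l!i - 6 = j - c j" by simp_all
      moreover have "l!i \<in> set l" using ir by simp
      ultimately show False using F1[OF jr] cl by metis
    qed
  next
    case False
    then have ir: "r \<le> i" by simp
    then have jr: "j < r" and iE: "i < E j" using rowout x' by auto
    have "6 + Suc i = l!j + c (Suc i)" using hook3[OF ir jr iE] h' by simp
    moreover have "c (Suc i) \<le> Suc i" using c_le ir by (meson order_trans le_SucI)
    ultimately have "6 \<le> l!j" "l!j - 6 = Suc i - c (Suc i)" by simp_all
    moreover have "l!j \<in> set l" using jr by simp
    moreover have "r \<le> Suc i" using ir by simp
    ultimately show False using F1 cl by metis
  qed
qed

lemma core_iff: "is_core 6 DD \<longleftrightarrow> Q (set l)"
  using core_imp_Q Q_imp_core by blast

end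


definition Rs :: "nat \<Rightarrow> nat \<Rightarrow> nat set" where "Rs \<rho> n = (\<lambda>k. 6*k+\<rho>) ` {..<n}"
definition R1 :: "int \<Rightarrow> nat set" where "R1 a = (if 0 \<le> a then Rs 1 (nat a) else Rs 5 (nat (-a)))"
definition R2 :: "int \<Rightarrow> nat set" where "R2 b = (if 0 \<le> b then Rs 2 (nat b) else Rs 4 (nat (-b)))"
definition Aset :: "int \<Rightarrow> int \<Rightarrow> nat set" where "Aset a b = R1 a \<union> R2 b"
definition cnt :: "nat \<Rightarrow> nat set \<Rightarrow> nat" where "cnt \<rho> A = card {x\<in>A. x mod 6 = \<rho>}"
definition g12 :: "nat set \<Rightarrow> int \<times> int" where
  "g12 A = (int (cnt 1 A) - int (cnt 5 A), int (cnt 2 A) - int (cnt 4 A))"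
definition lst :: "int \<Rightarrow> int \<Rightarrow> nat list" where "lst a b = rev (sorted_list_of_set (Aset a b))"
definition PP :: "nat \<Rightarrow> (int \<times> int) set" where
  "PP N = {(a,b). 3*a^2 - 2*a + 3*b^2 - b = int N}"

lemma Rs_mod: "x \<in> Rs \<rho> n \<Longrightarrow> \<rho> < 6 \<Longrightarrow> x mod 6 = \<rho>"
  unfolding Rs_def by auto

lemma Rs_filter: "\<rho> < 6 \<Longrightarrow> {x \<in> Rs \<rho> n. x mod 6 = \<rho>'} = (if \<rho> = \<rho>' then Rs \<rho> n else {})"
  using Rs_mod by auto

lemma inj_lin: "inj (\<lambda>k::nat. 6*k+\<rho>)" by (auto intro: injI)

lemma card_Rs: "card (Rs \<rho> n) = n"
  unfolding Rs_def by (simp add: card_image inj_on_subset[OF inj_lin])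

lemma finite_Rs: "finite (Rs \<rho> n)" unfolding Rs_def by simp

lemma sum_lin: "int (\<Sum>k<n. 6*k+\<rho>) = 3 * int n^2 - 3 * int n + int \<rho> * int n"
  by (induction n) (simp_all add: algebra_simps power2_eq_square)

lemma sum_Rs: "int (\<Sum>(Rs \<rho> n)) = 3 * int n^2 - 3 * int n + int \<rho> * int n"
proof -
  have "\<Sum>(Rs \<rho> n) = (\<Sum>k<n. 6*k+\<rho>)"
    unfolding Rs_def by (simp add: sum.reindex inj_on_subset[OF inj_lin])
  then show ?thesis using sum_lin by simp
qed

lemma Rs_n: "x \<in> Rs \<rho> n \<Longrightarrow> 0 < n"
  unfolding Rs_def by auto

lemma R1_mod: assumes x: "x \<in> R1 a" shows "(x mod 6 = 1 \<and> 0 < a) \<or> (x mod 6 = 5 \<and> a < 0)"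
proof (cases "0 \<le> a")
  case True
  then have "x \<in> Rs 1 (nat a)" using x unfolding R1_def by simp
  then show ?thesis using Rs_mod[of x 1] Rs_n[of x 1 "nat a"] True by simp
next
  case False
  then have "x \<in> Rs 5 (nat (-a))" using x unfolding R1_def by simp
  then show ?thesis using Rs_mod[of x 5] False by simp
qed

lemma R2_mod: assumes x: "x \<in> R2 b" shows "(x mod 6 = 2 \<and> 0 < b) \<or> (x mod 6 = 4 \<and> b < 0)"
proof (cases "0 \<le> b")
  case True
  then have "x \<in> Rs 2 (nat b)" using x unfolding R2_def by simp
  then show ?thesis using Rs_mod[of x 2] Rs_n[of x 2 "nat b"] True by simp
next
  case False
  then have "x \<in> Rs 4 (nat (-b))" using x unfolding R2_def by simp
  then show ?thesis using Rs_mod[of x 4] False by simp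
qed

lemma finite_Aset: "finite (Aset a b)"
  unfolding Aset_def R1_def R2_def by (simp add: finite_Rs)

lemma Aset_mod: "x \<in> Aset a b \<Longrightarrow> (x mod 6 = 1 \<and> 0 < a) \<or> (x mod 6 = 5 \<and> a < 0) \<or> (x mod 6 = 2 \<and> 0 < b) \<or> (x mod 6 = 4 \<and> b < 0)"
  unfolding Aset_def using R1_mod R2_mod by blast

lemma Aset_pos: "x \<in> Aset a b \<Longrightarrow> 0 < x"
  using Aset_mod by fastforce

lemma cnt_Aset:
  "cnt 1 (Aset a b) = (if 0 \<le> a then nat a else 0)"
  "cnt 5 (Aset a b) = (if 0 \<le> a then 0 else nat (-a))"
  "cnt 2 (Aset a b) = (if 0 \<le> b then nat b else 0)"
  "cnt 4 (Aset a b) = (if 0 \<le> b then 0 else nat (-b))"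
proof -
  have e: "{x\<in>Aset a b. x mod 6 = \<rho>} = {x\<in>R1 a. x mod 6 = \<rho>} \<union> {x\<in>R2 b. x mod 6 = \<rho>}" for \<rho>
    unfolding Aset_def by auto
  have r1: "{x\<in>R1 a. x mod 6 = \<rho>} = (if 0 \<le> a then (if \<rho> = 1 then Rs 1 (nat a) else {})
               else (if \<rho> = 5 then Rs 5 (nat (-a)) else {}))" for \<rho>
    unfolding R1_def using Rs_filter[of 1] Rs_filter[of 5] by auto
  have r2: "{x\<in>R2 b. x mod 6 = \<rho>} = (if 0 \<le> b then (if \<rho> = 2 then Rs 2 (nat b) else {})
               else (if \<rho> = 4 then Rs 4 (nat (-b)) else {}))" for \<rho>
    unfolding R2_def using Rs_filter[of 2] Rs_filter[of 4] by auto
  show "cnt 1 (Aset a b) = (if 0 \<le> a then nat a else 0)"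
    unfolding cnt_def e r1 r2 by (simp add: card_Rs)
  show "cnt 5 (Aset a b) = (if 0 \<le> a then 0 else nat (-a))"
    unfolding cnt_def e r1 r2 by (simp add: card_Rs)
  show "cnt 2 (Aset a b) = (if 0 \<le> b then nat b else 0)"
    unfolding cnt_def e r1 r2 by (simp add: card_Rs)
  show "cnt 4 (Aset a b) = (if 0 \<le> b then 0 else nat (-b))"
    unfolding cnt_def e r1 r2 by (simp add: card_Rs)
qed

lemma g12_Aset: "g12 (Aset a b) = (a, b)"
  unfolding g12_def cnt_Aset by simp

lemma sum_R1: "int (\<Sum>(R1 a)) = 3*a^2 - 2*a"
proof (cases "0 \<le> a")
  case True
  then have "int (\<Sum>(R1 a)) = 3 * int (nat a)^2 - 3 * int (nat a) + int 1 * int (nat a)"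
    unfolding R1_def by (simp only: if_True sum_Rs)
  then show ?thesis using True by simp
next
  case False
  then have "int (\<Sum>(R1 a)) = 3 * int (nat (-a))^2 - 3 * int (nat (-a)) + int 5 * int (nat (-a))"
    unfolding R1_def by (simp only: if_False sum_Rs)
  then show ?thesis using False by (simp add: power2_eq_square)
qed

lemma sum_R2: "int (\<Sum>(R2 b)) = 3*b^2 - b"
proof (cases "0 \<le> b")
  case True
  then have "int (\<Sum>(R2 b)) = 3 * int (nat b)^2 - 3 * int (nat b) + int 2 * int (nat b)"
    unfolding R2_def by (simp only: if_True sum_Rs)
  then show ?thesis using True by simp
next
  case False
  then have "int (\<Sum>(R2 b)) = 3 * int (nat (-b))^2 - 3 * int (nat (-b)) + int 4 * int (nat (-b))"
    unfolding R2_def by (simp only: if_False sum_Rs)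
  then show ?thesis using False by (simp add: power2_eq_square)
qed

lemma sum_Aset: "int (\<Sum>(Aset a b)) = 3*a^2 - 2*a + 3*b^2 - b"
proof -
  have d: "R1 a \<inter> R2 b = {}" using R1_mod R2_mod by fastforce
  have f: "finite (R1 a)" "finite (R2 b)" using finite_Aset unfolding Aset_def by auto
  have "\<Sum>(Aset a b) = \<Sum>(R1 a) + \<Sum>(R2 b)" unfolding Aset_def using sum.union_disjoint[OF f d] by simp
  then show ?thesis using sum_R1 sum_R2 by simp
qed

lemma Rs_down: "x \<in> Rs \<rho> n \<Longrightarrow> 6 \<le> x \<Longrightarrow> \<rho> < 6 \<Longrightarrow> x - 6 \<in> Rs \<rho> n"
  unfolding Rs_def
proof -
  assume "x \<in> (\<lambda>k. 6*k+\<rho>) ` {..<n}" "6 \<le> x" "\<rho> < 6"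
  then obtain k where k: "k < n" "x = 6*k+\<rho>" by auto
  then have "0 < k" using \<open>6 \<le> x\<close> \<open>\<rho> < 6\<close> by (cases k) auto
  then have "x - 6 = 6*(k-1)+\<rho>" using k by (cases k) auto
  then show "x - 6 \<in> (\<lambda>k. 6*k+\<rho>) ` {..<n}" using k by auto
qed

lemma Q_Aset: "Q (Aset a b)"
proof -
  have cl: "x - 6 \<in> Aset a b" if "x \<in> Aset a b" "6 \<le> x" for x
  proof -
    have "x \<in> R1 a \<or> x \<in> R2 b" using that unfolding Aset_def by simp
    then show ?thesis unfolding Aset_def R1_def R2_def using Rs_down that(2)
      by (auto split: if_splits)
  qed
  have "3 \<notin> Aset a b" using Aset_mod by fastforce
  moreover have "\<not> (1 \<in> Aset a b \<and> 5 \<in> Aset a b)" using Aset_mod[of 1 a b] Aset_mod[of 5 a b] by auto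
  moreover have "\<not> (2 \<in> Aset a b \<and> 4 \<in> Aset a b)" using Aset_mod[of 2 a b] Aset_mod[of 4 a b] by auto
  ultimately show ?thesis unfolding Q_def using cl by blast
qed



lemma class_eq:
  assumes fin: "finite A" and cl: "\<And>a. a \<in> A \<Longrightarrow> 6 \<le> a \<Longrightarrow> a - 6 \<in> A" and r: "\<rho> < 6"
  shows "{x\<in>A. x mod 6 = \<rho>} = Rs \<rho> (cnt \<rho> A)"
proof -
  define K where "K = (\<lambda>k. 6*k+\<rho>) -` A"
  have Kfin: "finite K" unfolding K_def using fin inj_lin by (rule finite_vimageI)
  have step: "6*k+\<rho> \<in> A" if "6*(k+d)+\<rho> \<in> A" for k d
    using that
  proof (induction d)
    case 0 then show ?case by simp
  next
    case (Suc d)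
    have "6*(k+Suc d)+\<rho> - 6 = 6*(k+d)+\<rho>" by simp
    moreover have "6 \<le> 6*(k+Suc d)+\<rho>" by simp
    ultimately have "6*(k+d)+\<rho> \<in> A" using cl[OF Suc.prems] by metis
    then show ?case using Suc.IH by simp
  qed
  have Kdc: "y \<in> K" if "x \<in> K" "y \<le> x" for x y
    using that step[of y "x - y"] unfolding K_def by simp
  have Keq: "K = {..<card K}" by (rule downclosed_eq[OF Kfin Kdc])
  have img: "{x\<in>A. x mod 6 = \<rho>} = (\<lambda>k. 6*k+\<rho>) ` K"
  proof (intro set_eqI iffI)
    fix x assume "x \<in> {x\<in>A. x mod 6 = \<rho>}"
    then have xm: "x mod 6 = \<rho>" "x \<in> A" by simp_all
    have "6*(x div 6) + x mod 6 = x" by (rule mult_div_mod_eq)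
    then have "x = 6*(x div 6)+\<rho>" "x \<in> A" using xm by simp_all
    then show "x \<in> (\<lambda>k. 6*k+\<rho>) ` K" unfolding K_def by (metis image_eqI vimage_eq)
  next
    fix x assume "x \<in> (\<lambda>k. 6*k+\<rho>) ` K"
    then show "x \<in> {x\<in>A. x mod 6 = \<rho>}" unfolding K_def using r by auto
  qed
  have "card {x\<in>A. x mod 6 = \<rho>} = card K"
    unfolding img by (simp add: card_image inj_on_subset[OF inj_lin])
  then have "cnt \<rho> A = card K" unfolding cnt_def by simp
  then show ?thesis unfolding img Rs_def using Keq by simp
qed

lemma Aset_g12:
  assumes fin: "finite A" and q: "Q A" and z: "0 \<notin> A"
  shows "Aset (fst (g12 A)) (snd (g12 A)) = A"
proof -
  have cl: "\<And>a. a \<in> A \<Longrightarrow> 6 \<le> a \<Longrightarrow> a - 6 \<in> A" using q unfolding Q_def by blast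
  define B where "B \<rho> = {x\<in>A. x mod 6 = \<rho>}" for \<rho>
  have B: "B \<rho> = Rs \<rho> (cnt \<rho> A)" if "\<rho> < 6" for \<rho> unfolding B_def by (rule class_eq[OF fin cl that])
  have first: "\<rho> \<in> A" if "\<rho> < 6" "cnt \<rho> A \<noteq> 0" for \<rho>
  proof -
    have "\<rho> \<in> Rs \<rho> (cnt \<rho> A)" unfolding Rs_def using that(2) by force
    then show ?thesis using B[OF that(1)] unfolding B_def by blast
  qed
  have c0: "cnt 0 A = 0" using first[of 0] z by auto
  have c3: "cnt 3 A = 0" using first[of 3] q unfolding Q_def by auto
  have c15: "cnt 1 A = 0 \<or> cnt 5 A = 0" using first[of 1] first[of 5] q unfolding Q_def by auto
  have c24: "cnt 2 A = 0 \<or> cnt 4 A = 0" using first[of 2] first[of 4] q unfolding Q_def by auto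
  have Rs0: "Rs \<rho> 0 = {}" for \<rho> unfolding Rs_def by simp
  have Aeq: "A = B 0 \<union> B 1 \<union> B 2 \<union> B 3 \<union> B 4 \<union> B 5"
  proof
    show "A \<subseteq> B 0 \<union> B 1 \<union> B 2 \<union> B 3 \<union> B 4 \<union> B 5"
    proof
      fix x assume x: "x \<in> A"
      have "x mod 6 < 6" by simp
      then have "x mod 6 = 0 \<or> x mod 6 = 1 \<or> x mod 6 = 2 \<or> x mod 6 = 3 \<or> x mod 6 = 4 \<or> x mod 6 = 5" by linarith
      then show "x \<in> B 0 \<union> B 1 \<union> B 2 \<union> B 3 \<union> B 4 \<union> B 5" unfolding B_def using x by blast
    qed
  qed (auto simp: B_def)
  have r1: "R1 (fst (g12 A)) = B 1 \<union> B 5"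
  proof (cases "cnt 5 A = 0")
    case True
    then show ?thesis unfolding R1_def g12_def using B[of 1] B[of 5] Rs0 by simp
  next
    case False
    then have "cnt 1 A = 0" using c15 by simp
    then show ?thesis unfolding R1_def g12_def using B[of 1] B[of 5] Rs0 False by simp
  qed
  have r2: "R2 (snd (g12 A)) = B 2 \<union> B 4"
  proof (cases "cnt 4 A = 0")
    case True
    then show ?thesis unfolding R2_def g12_def using B[of 2] B[of 4] Rs0 by simp
  next
    case False
    then have "cnt 2 A = 0" using c24 by simp
    then show ?thesis unfolding R2_def g12_def using B[of 2] B[of 4] Rs0 False by simp
  qed
  have "B 0 = {}" "B 3 = {}" using B[of 0] B[of 3] c0 c3 Rs0 by simp_all
  then show ?thesis unfolding Aset_def r1 r2 using Aeq by blast
qed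



lemma set_lst: "set (lst a b) = Aset a b"
  unfolding lst_def using finite_Aset set_sorted_list_of_set set_rev by metis

lemma bar_lst: "bar_partition (lst a b)"
proof -
  have "sorted_wrt (<) (sorted_list_of_set (Aset a b))" by (rule strict_sorted_list_of_set)
  then have "sorted_wrt (>) (lst a b)" unfolding lst_def sorted_wrt_rev .
  moreover have "\<forall>x\<in>set (lst a b). x > 0" unfolding set_lst using Aset_pos by blast
  ultimately show ?thesis unfolding bar_partition_def by blast
qed

lemma sum_lst: "sum_list (lst a b) = \<Sum>(Aset a b)"
proof -
  have "distinct (lst a b)" unfolding lst_def distinct_rev by (rule distinct_sorted_list_of_set)
  then have "sum_list (lst a b) = \<Sum>(set (lst a b))" by (rule distinct_sum_list_conv_Sum)
  then show ?thesis unfolding set_lst .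
qed

lemma lst_set:
  assumes bp: "bar_partition l"
  shows "rev (sorted_list_of_set (set l)) = l"
proof -
  have "sorted_wrt (>) l" using bp unfolding bar_partition_def by blast
  then have s: "sorted_wrt (<) (rev l)" unfolding sorted_wrt_rev .
  then have "distinct (rev l)" using strict_sorted_iff by blast
  then have "length (rev l) = card (set l)" using distinct_card set_rev by metis
  moreover have "set (rev l) = set l" by simp
  ultimately have "sorted_list_of_set (set l) = rev l"
    using s sorted_list_of_set_unique[of "set l" "rev l"] by blast
  then show ?thesis by simp
qed

lemma D6_alt: "D6 N = {l. bar_partition l \<and> sum_list l = N \<and> Q (set l)}"
proof (intro set_eqI)
  fix l
  show "l \<in> D6 N \<longleftrightarrow> l \<in> {l. bar_partition l \<and> sum_list l = N \<and> Q (set l)}"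
  proof (cases "bar_partition l")
    case True
    have e: "is_core 6 (double_distinct l) \<longleftrightarrow> Q (set l)" by (rule barp.core_iff[OF barp.intro[OF True]])
    have "Q (set l) \<Longrightarrow> 3 \<notin> set l" unfolding Q_def by blast
    then show ?thesis unfolding D6_def using True e by blast
  next
    case False then show ?thesis unfolding D6_def by blast
  qed
qed

lemma bij_D6: "bij_betw (\<lambda>(a,b). lst a b) (PP N) (D6 N)"
proof (rule bij_betw_byWitness[where f' = "\<lambda>l. g12 (set l)"])
  show "\<forall>p\<in>PP N. g12 (set (case p of (a,b) \<Rightarrow> lst a b)) = p"
    using set_lst g12_Aset by auto
  show "\<forall>l\<in>D6 N. (case g12 (set l) of (a,b) \<Rightarrow> lst a b) = l"
  proof
    fix l assume "l \<in> D6 N"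
    then have l: "bar_partition l" "Q (set l)" unfolding D6_alt by auto
    have "0 \<notin> set l" using l(1) unfolding bar_partition_def by auto
    then have "Aset (fst (g12 (set l))) (snd (g12 (set l))) = set l"
      using Aset_g12 l by simp
    then show "(case g12 (set l) of (a,b) \<Rightarrow> lst a b) = l"
      unfolding lst_def using lst_set[OF l(1)] by (simp add: case_prod_beta)
  qed
  show "(\<lambda>(a,b). lst a b) ` PP N \<subseteq> D6 N"
  proof
    fix l assume "l \<in> (\<lambda>(a,b). lst a b) ` PP N"
    then obtain a b where ab: "(a,b) \<in> PP N" "l = lst a b" by auto
    have "int (sum_list l) = int N" using ab sum_lst sum_Aset unfolding PP_def by simp
    then show "l \<in> D6 N" unfolding D6_alt using ab bar_lst set_lst Q_Aset by simp
  qed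
  show "(\<lambda>l. g12 (set l)) ` D6 N \<subseteq> PP N"
  proof
    fix p assume "p \<in> (\<lambda>l. g12 (set l)) ` D6 N"
    then obtain l where l: "l \<in> D6 N" "p = g12 (set l)" by auto
    then have l2: "bar_partition l" "Q (set l)" "sum_list l = N" unfolding D6_alt by auto
    have "0 \<notin> set l" using l2(1) unfolding bar_partition_def by auto
    then have e: "Aset (fst p) (snd p) = set l" using Aset_g12 l2 l by simp
    have "sorted_wrt (<) (rev l)" using l2(1) unfolding bar_partition_def sorted_wrt_rev by blast
    then have "distinct l" using strict_sorted_iff distinct_rev by blast
    then have "\<Sum>(set l) = N" using l2(3) distinct_sum_list_conv_Sum by metis
    then have "int (\<Sum>(Aset (fst p) (snd p))) = int N" using e by simp
    then show "p \<in> PP N" unfolding PP_def using sum_Aset by (cases p) simp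
  qed
qed


lemma sq_mod: "(x::int)^2 mod 12 = ((x mod 6)^2) mod 12"
proof -
  define q where "q = x div 6"
  define u where "u = x mod 6"
  have x: "x = 6*q+u" unfolding q_def u_def by simp
  have "x^2 = 12*(3*q^2+q*u) + u^2" unfolding x by (simp add: power2_eq_square algebra_simps)
  then have "x^2 mod 12 = (u^2 + 12*(3*q^2+q*u)) mod 12" by (simp add: add.commute)
  also have "\<dots> = u^2 mod 12" by (rule mod_mult_self2)
  finally have "x^2 mod 12 = u^2 mod 12" .
  then show ?thesis unfolding u_def .
qed

lemma modfact:
  fixes x y :: int
  assumes e: "x^2 + y^2 = 12 * int N + 5"
  shows "(x mod 6 \<in> {2,4} \<and> y mod 6 \<in> {1,5}) \<or> (x mod 6 \<in> {1,5} \<and> y mod 6 \<in> {2,4})"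
proof -
  define u where "u = x mod 6"
  define v where "v = y mod 6"
  have "(x^2 + y^2) mod 12 = (12 * int N + 5) mod 12" unfolding e by simp
  also have "\<dots> = 5" by simp
  finally have "(x^2 mod 12 + y^2 mod 12) mod 12 = 5" by (simp add: mod_add_eq)
  then have m: "(u^2 mod 12 + v^2 mod 12) mod 12 = 5" unfolding u_def v_def sq_mod[of x] sq_mod[of y] .
  have "0 \<le> u" "u < 6" "0 \<le> v" "v < 6" unfolding u_def v_def by simp_all
  then have "u = 0 \<or> u = 1 \<or> u = 2 \<or> u = 3 \<or> u = 4 \<or> u = 5"
    and "v = 0 \<or> v = 1 \<or> v = 2 \<or> v = 3 \<or> v = 4 \<or> v = 5" by linarith+
  then have "(u \<in> {2,4} \<and> v \<in> {1,5}) \<or> (u \<in> {1,5} \<and> v \<in> {2,4})"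
    using m by (elim disjE) simp_all
  then show ?thesis unfolding u_def v_def .
qed
lemma card_half:
  assumes fin: "finite X" and bij: "bij_betw f {p\<in>X. P p} {p\<in>X. \<not> P p}"
  shows "card X = 2 * card {p\<in>X. P p}"
proof -
  have "X = {p\<in>X. P p} \<union> {p\<in>X. \<not> P p}" by blast
  then have "card X = card {p\<in>X. P p} + card {p\<in>X. \<not> P p}"
    using fin by (metis (no_types, lifting) card_Un_disjoint disjoint_iff finite_Un mem_Collect_eq)
  moreover have "card {p\<in>X. \<not> P p} = card {p\<in>X. P p}" using bij_betw_same_card[OF bij] by simp
  ultimately show ?thesis by simp
qed

lemma neg_mod6: "(x::int) mod 6 = 4 \<Longrightarrow> (-x) mod 6 = 2" "(x::int) mod 6 = 2 \<Longrightarrow> (-x) mod 6 = 4"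
  "(x::int) mod 6 = 1 \<Longrightarrow> (-x) mod 6 = 5" "(x::int) mod 6 = 5 \<Longrightarrow> (-x) mod 6 = 1"
  by (simp_all add: zmod_zminus1_eq_if)

definition SS :: "nat \<Rightarrow> (int \<times> int) set" where
  "SS N = {(x::int, y::int). x ^ 2 + y ^ 2 = 12 * int N + 5}"

lemma abs_le_sq: "\<bar>x::int\<bar> \<le> x^2"
proof (cases "x = 0")
  case False
  then have "1 \<le> \<bar>x\<bar>" by simp
  then have "\<bar>x\<bar> * 1 \<le> \<bar>x\<bar> * \<bar>x\<bar>" by (intro mult_left_mono) simp_all
  then show ?thesis by (simp add: power2_eq_square abs_mult_self_eq)
qed simp

lemma finite_SS: "finite (SS N)"
proof -
  define M where "M = 12 * int N + 5"
  have "SS N \<subseteq> {-M..M} \<times> {-M..M}"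
  proof
    fix p assume "p \<in> SS N"
    then obtain x y where p: "p = (x,y)" "x^2 + y^2 = M" unfolding SS_def M_def by auto
    have "x^2 \<le> M" using p(2) zero_le_power2[of y] by linarith
    have "y^2 \<le> M" using p(2) zero_le_power2[of x] by linarith
    then have "\<bar>x\<bar> \<le> M" "\<bar>y\<bar> \<le> M" using abs_le_sq[of x] abs_le_sq[of y] \<open>x^2 \<le> M\<close> by linarith+
    then show "p \<in> {-M..M} \<times> {-M..M}" using p(1) by auto
  qed
  then show ?thesis by (rule finite_subset) simp
qed



definition S1 where "S1 N = {p\<in>SS N. fst p mod 6 \<in> {2,4}}"
definition S2 where "S2 N = {p\<in>S1 N. fst p mod 6 = 4}"
definition TT where "TT N = {p\<in>S2 N. snd p mod 6 = 5}"

lemma SS_mem: "(x,y) \<in> SS N \<longleftrightarrow> x^2 + y^2 = 12 * int N + 5" unfolding SS_def by simp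

lemma step1: "card (SS N) = 2 * card (S1 N)"
  unfolding S1_def
proof (rule card_half[OF finite_SS])
  let ?f = "\<lambda>(x::int,y::int). (y,x)"
  show "bij_betw ?f {p \<in> SS N. fst p mod 6 \<in> {2, 4}} {p \<in> SS N. fst p mod 6 \<notin> {2, 4}}"
  proof (rule bij_betw_byWitness[where f' = ?f])
    show "\<forall>a\<in>{p \<in> SS N. fst p mod 6 \<in> {2, 4}}. ?f (?f a) = a" by auto
    show "\<forall>a\<in>{p \<in> SS N. fst p mod 6 \<notin> {2, 4}}. ?f (?f a) = a" by auto
    show "?f ` {p \<in> SS N. fst p mod 6 \<in> {2, 4}} \<subseteq> {p \<in> SS N. fst p mod 6 \<notin> {2, 4}}"
    proof
      fix q assume "q \<in> ?f ` {p \<in> SS N. fst p mod 6 \<in> {2, 4}}"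
      then obtain x y where q: "q = (y,x)" "(x,y) \<in> SS N" "x mod 6 \<in> {2,4}" by auto
      then have e: "x^2 + y^2 = 12 * int N + 5" using SS_mem by blast
      then have "y mod 6 \<in> {1,5}" using modfact[OF e] q(3) by auto
      moreover have "(y,x) \<in> SS N" using e SS_mem by (simp add: add.commute)
      ultimately show "q \<in> {p \<in> SS N. fst p mod 6 \<notin> {2, 4}}" using q(1) by auto
    qed
    show "?f ` {p \<in> SS N. fst p mod 6 \<notin> {2, 4}} \<subseteq> {p \<in> SS N. fst p mod 6 \<in> {2, 4}}"
    proof
      fix q assume "q \<in> ?f ` {p \<in> SS N. fst p mod 6 \<notin> {2, 4}}"
      then obtain x y where q: "q = (y,x)" "(x,y) \<in> SS N" "x mod 6 \<notin> {2,4}" by auto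
      then have e: "x^2 + y^2 = 12 * int N + 5" using SS_mem by blast
      then have "y mod 6 \<in> {2,4}" using modfact[OF e] q(3) by auto
      moreover have "(y,x) \<in> SS N" using e SS_mem by (simp add: add.commute)
      ultimately show "q \<in> {p \<in> SS N. fst p mod 6 \<in> {2, 4}}" using q(1) by auto
    qed
  qed
qed

lemma finite_S1: "finite (S1 N)" unfolding S1_def using finite_SS by simp
lemma finite_S2: "finite (S2 N)" unfolding S2_def using finite_S1 by simp

lemma step2: "card (S1 N) = 2 * card (S2 N)"
  unfolding S2_def
proof (rule card_half[OF finite_S1])
  let ?f = "\<lambda>(x::int,y::int). (-x,y)"
  show "bij_betw ?f {p \<in> S1 N. fst p mod 6 = 4} {p \<in> S1 N. fst p mod 6 \<noteq> 4}"
  proof (rule bij_betw_byWitness[where f' = ?f])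
    show "\<forall>a\<in>{p \<in> S1 N. fst p mod 6 = 4}. ?f (?f a) = a" by auto
    show "\<forall>a\<in>{p \<in> S1 N. fst p mod 6 \<noteq> 4}. ?f (?f a) = a" by auto
    show "?f ` {p \<in> S1 N. fst p mod 6 = 4} \<subseteq> {p \<in> S1 N. fst p mod 6 \<noteq> 4}"
    proof
      fix q assume "q \<in> ?f ` {p \<in> S1 N. fst p mod 6 = 4}"
      then obtain x y where q: "q = (-x,y)" "(x,y) \<in> SS N" "x mod 6 = 4" unfolding S1_def by auto
      then have "(-x) mod 6 = 2" using neg_mod6 by blast
      moreover have "(-x,y) \<in> SS N" using q(2) SS_mem by simp
      ultimately show "q \<in> {p \<in> S1 N. fst p mod 6 \<noteq> 4}" using q(1) unfolding S1_def by auto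
    qed
    show "?f ` {p \<in> S1 N. fst p mod 6 \<noteq> 4} \<subseteq> {p \<in> S1 N. fst p mod 6 = 4}"
    proof
      fix q assume "q \<in> ?f ` {p \<in> S1 N. fst p mod 6 \<noteq> 4}"
      then obtain x y where q: "q = (-x,y)" "(x,y) \<in> SS N" "x mod 6 = 2" unfolding S1_def by auto
      then have "(-x) mod 6 = 4" using neg_mod6 by blast
      moreover have "(-x,y) \<in> SS N" using q(2) SS_mem by simp
      ultimately show "q \<in> {p \<in> S1 N. fst p mod 6 = 4}" using q(1) unfolding S1_def by auto
    qed
  qed
qed

lemma step3: "card (S2 N) = 2 * card (TT N)"
  unfolding TT_def
proof (rule card_half[OF finite_S2])
  let ?f = "\<lambda>(x::int,y::int). (x,-y)"
  have ymod: "y mod 6 \<in> {1,5}" if "(x,y) \<in> S2 N" for x y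
  proof -
    have e: "x^2 + y^2 = 12 * int N + 5" "x mod 6 = 4" using that SS_mem unfolding S2_def S1_def by auto
    then show ?thesis using modfact[OF e(1)] by auto
  qed
  show "bij_betw ?f {p \<in> S2 N. snd p mod 6 = 5} {p \<in> S2 N. snd p mod 6 \<noteq> 5}"
  proof (rule bij_betw_byWitness[where f' = ?f])
    show "\<forall>a\<in>{p \<in> S2 N. snd p mod 6 = 5}. ?f (?f a) = a" by auto
    show "\<forall>a\<in>{p \<in> S2 N. snd p mod 6 \<noteq> 5}. ?f (?f a) = a" by auto
    show "?f ` {p \<in> S2 N. snd p mod 6 = 5} \<subseteq> {p \<in> S2 N. snd p mod 6 \<noteq> 5}"
    proof
      fix q assume "q \<in> ?f ` {p \<in> S2 N. snd p mod 6 = 5}"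
      then obtain x y where q: "q = (x,-y)" "(x,y) \<in> S2 N" "y mod 6 = 5" by auto
      then have "(-y) mod 6 = 1" using neg_mod6 by blast
      moreover have "(x,-y) \<in> S2 N" using q(2) SS_mem unfolding S2_def S1_def by simp
      ultimately show "q \<in> {p \<in> S2 N. snd p mod 6 \<noteq> 5}" using q(1) by auto
    qed
    show "?f ` {p \<in> S2 N. snd p mod 6 \<noteq> 5} \<subseteq> {p \<in> S2 N. snd p mod 6 = 5}"
    proof
      fix q assume "q \<in> ?f ` {p \<in> S2 N. snd p mod 6 \<noteq> 5}"
      then obtain x y where q: "q = (x,-y)" "(x,y) \<in> S2 N" "y mod 6 \<noteq> 5" by auto
      then have "y mod 6 = 1" using ymod by blast
      then have "(-y) mod 6 = 5" using neg_mod6 by blast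
      moreover have "(x,-y) \<in> S2 N" using q(2) SS_mem unfolding S2_def S1_def by simp
      ultimately show "q \<in> {p \<in> S2 N. snd p mod 6 = 5}" using q(1) by auto
    qed
  qed
qed

lemma key_eq: "(6*a-2)^2 + (6*b-1)^2 = 12 * (3*a^2 - 2*a + 3*b^2 - b) + (5::int)"
  by (simp add: power2_eq_square algebra_simps)

lemma step4: "bij_betw (\<lambda>(a,b). (6*a-2, 6*b-1)) (PP N) (TT N)"
proof (rule bij_betw_byWitness[where f' = "\<lambda>(x,y). ((x+2) div 6, (y+1) div 6)"])
  show "\<forall>p\<in>PP N. (case (case p of (a,b) \<Rightarrow> (6*a-2, 6*b-1)) of (x,y) \<Rightarrow> ((x+2) div 6, (y+1) div 6)) = p"
    by auto
  show "\<forall>p\<in>TT N. (case (case p of (x,y) \<Rightarrow> ((x+2) div 6, (y+1) div 6)) of (a,b) \<Rightarrow> (6*a-2, 6*b-1)) = p"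
  proof
    fix p assume "p \<in> TT N"
    then obtain x y where p: "p = (x,y)" "x mod 6 = 4" "y mod 6 = 5" unfolding TT_def S2_def S1_def by (cases p) auto
    have "6*((x+2) div 6) - 2 = x" using p(2) by presburger
    moreover have "6*((y+1) div 6) - 1 = y" using p(3) by presburger
    ultimately show "(case (case p of (x,y) \<Rightarrow> ((x+2) div 6, (y+1) div 6)) of (a,b) \<Rightarrow> (6*a-2, 6*b-1)) = p"
      using p(1) by simp
  qed
  show "(\<lambda>(a,b). (6*a-2, 6*b-1)) ` PP N \<subseteq> TT N"
  proof
    fix q assume "q \<in> (\<lambda>(a,b). (6*a-2, 6*b-1)) ` PP N"
    then obtain a b where q: "q = (6*a-2, 6*b-1)" "3*a^2 - 2*a + 3*b^2 - b = int N" unfolding PP_def by auto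
    have "(6*a-2) mod 6 = 4" "(6*b-1) mod 6 = 5" by presburger+
    moreover have "(6*a-2)^2 + (6*b-1)^2 = 12 * int N + 5" using key_eq[of a b] q(2) by simp
    ultimately show "q \<in> TT N" unfolding TT_def S2_def S1_def using q(1) SS_mem by simp
  qed
  show "(\<lambda>(x,y). ((x+2) div 6, (y+1) div 6)) ` TT N \<subseteq> PP N"
  proof
    fix q assume "q \<in> (\<lambda>(x,y). ((x+2) div 6, (y+1) div 6)) ` TT N"
    then obtain x y where q: "q = ((x+2) div 6, (y+1) div 6)" "(x,y) \<in> TT N" by auto
    then have m: "x mod 6 = 4" "y mod 6 = 5" and e: "x^2 + y^2 = 12 * int N + 5"
      unfolding TT_def S2_def S1_def using SS_mem by auto
    define a where "a = (x+2) div 6"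
    define b where "b = (y+1) div 6"
    have "x = 6*a-2" unfolding a_def using m(1) by presburger
    moreover have "y = 6*b-1" unfolding b_def using m(2) by presburger
    ultimately have "12 * (3*a^2 - 2*a + 3*b^2 - b) + 5 = 12 * int N + 5" using e key_eq[of a b] by simp
    then have "3*a^2 - 2*a + 3*b^2 - b = int N" by simp
    then show "q \<in> PP N" unfolding PP_def q(1) a_def b_def by simp
  qed
qed

lemma card_SS: "card (SS N) = 8 * card (PP N)"
  using step1 step2 step3 bij_betw_same_card[OF step4] by simp


theorem corollary8p18:
  fixes N :: nat
  shows "real (card (D6 N)) =
         real (card {(x::int, y::int). x ^ 2 + y ^ 2 = 12 * int N + 5}) / 8"
proof -
  have a: "card {(x::int, y::int). x ^ 2 + y ^ 2 = 12 * int N + 5} = 8 * card (PP N)"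
    using card_SS unfolding SS_def .
  have b: "card (PP N) = card (D6 N)" using bij_betw_same_card[OF bij_D6] .
  show ?thesis unfolding a b by simp
qed

end
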